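(* Let $D,\ell,\beta>0$ and $a>0$, and let $h$ solve $\omega_N^2h(x)+2\xi\omega_Nh'(x)+h''(x)=0$ with $h(0)=0$, $h'(0)=1$, where $\omega_N=\frac{\sqrt{a\beta}}{2}$ and $\xi=\frac{D\ell}{4}\sqrt{\beta/a}$. If $$a=\frac{D^2\ell^2\beta}{16}\Big(1-\tanh^2\Big(\frac{D^2\ell\beta}{8}\Big)\Big),$$ then $h'(x)>0$ and $h''(x)<0$ for all $x\in[0,D]$, and $$(h'(D))^{-1}=\frac{e^{D\omega_N\xi}}{\cosh(D\omega_N\sqrt{\xi^2-1})-\frac{\xi}{\sqrt{\xi^2-1}}\sinh(D\omega_N\sqrt{\xi^2-1})}.$$ If $D^2\ell\beta<8$ and $a=\frac{4}{D^2\beta}$, then $h'(x)>0$ and $h''(x)<0$ for all $x\in[0,D]$, and $$(h'(D))^{-1}=\frac{e^{D\omega_N\xi}}{\cos(D\omega_N\sqrt{1-\xi^2})-\frac{\xi}{\sqrt{1-\xi^2}}\sin(D\omega_N\sqrt{1-\xi^2})}.$$ *)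

theory Defs
  imports Complex_Main
begin

end

theory Submission
  imports Defs
begin

lemma sinh_eqI: "(g has_real_derivative D) (at x within s) \<Longrightarrow> E = cosh (g x) * D \<Longrightarrow> ((\<lambda>x. sinh (g x)) has_real_derivative E) (at x within s)"
  using has_field_derivative_sinh by auto
lemma cosh_eqI: "(g has_real_derivative D) (at x within s) \<Longrightarrow> E = sinh (g x) * D \<Longrightarrow> ((\<lambda>x. cosh (g x)) has_real_derivative E) (at x within s)"
  using has_field_derivative_cosh by auto

lemma ode_uniq:
  fixes w k x :: real and h hd g gd :: "real \<Rightarrow> real"
  assumes k: "k \<ge> 0" and w: "w \<noteq> 0"
    and dh: "\<And>x. (h has_real_derivative hd x) (at x)"
    and dh1: "\<And>x. (hd has_real_derivative (- (w\<^sup>2 * h x) - 2*k*hd x)) (at x)"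
    and dg: "\<And>x. (g has_real_derivative gd x) (at x)"
    and dg1: "\<And>x. (gd has_real_derivative (- (w\<^sup>2 * g x) - 2*k*gd x)) (at x)"
    and i0: "h 0 = g 0" "hd 0 = gd 0" and x: "0 \<le> x"
  shows "h x = g x \<and> hd x = gd x"
proof -
  define E where "E y = (hd y - gd y)\<^sup>2 + w\<^sup>2*(h y - g y)\<^sup>2" for y
  have dE: "(E has_real_derivative (-4*k*(hd y - gd y)\<^sup>2)) (at y)" for y
    unfolding E_def
    apply (rule derivative_eq_intros dh dg dh1 dg1 refl)+
    apply (simp add: power2_eq_square algebra_simps)
    done
  have "E x \<le> E 0"
    apply (rule DERIV_nonpos_imp_nonincreasing[OF x])
    using dE k by (auto intro!: exI)
  moreover have "E 0 = 0" using i0 by (simp add: E_def)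
  ultimately have "(hd x - gd x)\<^sup>2 + w\<^sup>2*(h x - g x)\<^sup>2 \<le> 0" by (simp add: E_def)
  moreover have "w\<^sup>2 > 0" using w by simp
  moreover have "(hd x - gd x)\<^sup>2 \<ge> 0" "w\<^sup>2*(h x - g x)\<^sup>2 \<ge> 0" by simp_all
  ultimately have "(hd x - gd x)\<^sup>2 = 0" "w\<^sup>2*(h x - g x)\<^sup>2 = 0" by linarith+
  with w show ?thesis by simp
qed

lemma sin_lt: fixes y :: real assumes "0 < y" "y < 2" shows "sin y < y"
proof -
  have e: "sin y = 2*sin(y/2)*cos(y/2)" using sin_double[of "y/2"] by simp
  have "sin (y/2) \<le> y/2" using sin_x_le_x[of "y/2"] assms by simp
  moreover have "sin (y/2) > 0" using assms pi_ge_two by (intro sin_gt_zero) auto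
  moreover have "cos (y/2) < cos 0" using assms pi_ge_two by (subst cos_mono_less_eq) auto
  ultimately have "sin(y/2)*cos(y/2) < sin(y/2)*1"
    by (intro mult_strict_left_mono) auto
  with \<open>sin (y/2) \<le> y/2\<close> show ?thesis unfolding e by linarith
qed

lemma over_d1: fixes k m x :: real assumes "m > 0"
  shows "((\<lambda>x. exp(-k*x) * sinh(m*x)/m) has_real_derivative exp(-k*x)*(cosh(m*x) - k/m*sinh(m*x))) (at x)"
  using assms by (auto intro!: derivative_eq_intros sinh_eqI cosh_eqI simp: field_simps)

lemma over_d2: fixes k m w x :: real assumes "m > 0" "m\<^sup>2 = k\<^sup>2 - w\<^sup>2"
  shows "((\<lambda>x. exp(-k*x) * (cosh(m*x) - k/m*sinh(m*x))) has_real_derivative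
     (- (w\<^sup>2 * (exp(-k*x) * sinh(m*x)/m)) - 2*k*(exp(-k*x) * (cosh(m*x) - k/m*sinh(m*x))))) (at x)"
proof -
  have "((\<lambda>x. exp(-k*x) * (cosh(m*x) - k/m*sinh(m*x))) has_real_derivative exp(-k*x)*((k^2/m + m)* sinh(m*x) - 2*k*cosh(m*x))) (at x)"
    using assms by (auto intro!: derivative_eq_intros sinh_eqI cosh_eqI simp: field_simps power2_eq_square)
  moreover have "k^2/m + m = (2*k^2 - w^2)/m" using assms by (simp add: field_simps power2_eq_square)
  then have "exp(-k*x)*((k^2/m + m)* sinh(m*x) - 2*k*cosh(m*x)) = (- (w\<^sup>2 * (exp(-k*x) * sinh(m*x)/m)) - 2*k*(exp(-k*x) * (cosh(m*x) - k/m*sinh(m*x))))"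
    using assms by (simp add: field_simps power2_eq_square) (metis distrib_right mult.assoc)
  ultimately show ?thesis by simp
qed

lemma under_d1: fixes k m x :: real assumes "m > 0"
  shows "((\<lambda>x. exp(-k*x) * sin(m*x)/m) has_real_derivative exp(-k*x)*(cos(m*x) - k/m*sin(m*x))) (at x)"
  using assms by (auto intro!: derivative_eq_intros simp: field_simps)

lemma under_d2: fixes k m w x :: real assumes "m > 0" "m\<^sup>2 = w\<^sup>2 - k\<^sup>2"
  shows "((\<lambda>x. exp(-k*x) * (cos(m*x) - k/m*sin(m*x))) has_real_derivative
     (- (w\<^sup>2 * (exp(-k*x) * sin(m*x)/m)) - 2*k*(exp(-k*x) * (cos(m*x) - k/m*sin(m*x))))) (at x)"
proof -
  have "((\<lambda>x. exp(-k*x) * (cos(m*x) - k/m*sin(m*x))) has_real_derivative exp(-k*x)*((k^2/m - m)* sin(m*x) - 2*k*cos(m*x))) (at x)"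
    using assms by (auto intro!: derivative_eq_intros simp: field_simps power2_eq_square)
  moreover have "k^2/m - m = (2*k^2 - w^2)/m" using assms by (simp add: field_simps power2_eq_square)
  then have "exp(-k*x)*((k^2/m - m)* sin(m*x) - 2*k*cos(m*x)) = (- (w\<^sup>2 * (exp(-k*x) * sin(m*x)/m)) - 2*k*(exp(-k*x) * (cos(m*x) - k/m*sin(m*x))))"
    using assms by (simp add: field_simps power2_eq_square)
  ultimately show ?thesis by simp
qed

lemma th: fixes t :: real shows "1 - (tanh t)\<^sup>2 = 1 / (cosh t)\<^sup>2"
proof -
  have c: "(cosh t)\<^sup>2 > 0" by simp
  have "1 - (tanh t)\<^sup>2 = ((cosh t)\<^sup>2 - (sinh t)\<^sup>2) / (cosh t)\<^sup>2"
    using c by (simp add: tanh_def power_divide diff_divide_distrib)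
  also have "\<dots> = 1 / (cosh t)\<^sup>2" by (simp add: cosh_square_eq)
  finally show ?thesis .
qed
lemma case1:
  fixes D l \<beta> a \<omega> \<xi> :: real
    and h h1 h2 :: "real \<Rightarrow> real"
  assumes pos: "D > 0" "l > 0" "\<beta> > 0" "a > 0"
    and \<omega>_def: "\<omega> = sqrt (a * \<beta>) / 2"
    and \<xi>_def: "\<xi> = D * l / 4 * sqrt (\<beta> / a)"
    and d1: "\<And>x. (h has_real_derivative h1 x) (at x)"
    and dh1: "\<And>x. (h1 has_real_derivative (- (\<omega>\<^sup>2 * h x) - 2 * (\<omega> * \<xi>) * h1 x)) (at x)"
    and h2eq: "\<And>x. h2 x = - (\<omega>\<^sup>2 * h x) - 2 * (\<omega> * \<xi>) * h1 x"
    and init: "h 0 = 0" "h1 0 = 1"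
    and w_pos: "\<omega> > 0" and xi_pos: "\<xi> > 0"
    and A: "a = D\<^sup>2 * l\<^sup>2 * \<beta> / 16 * (1 - (tanh (D\<^sup>2 * l * \<beta> / 8))\<^sup>2)"
  shows "(\<forall>x\<in>{0..D}. h1 x > 0 \<and> h2 x < 0) \<and>
            inverse (h1 D) = exp (D * \<omega> * \<xi>) /
              (cosh (D * \<omega> * sqrt (\<xi>\<^sup>2 - 1))
               - \<xi> / sqrt (\<xi>\<^sup>2 - 1) * sinh (D * \<omega> * sqrt (\<xi>\<^sup>2 - 1)))"
proof (intro conjI)
    define t where "t = D\<^sup>2 * l * \<beta> / 8"
    have t_pos: "t > 0" using pos by (simp add: t_def)
    have c: "cosh t > 0" by simp
    have a2: "a = (D * l / (4 * cosh t))\<^sup>2 * \<beta>"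
      using A unfolding t_def[symmetric] th by (simp add: power2_eq_square field_simps)
    have "\<beta> / a = (4 * cosh t / (D * l))\<^sup>2"
      using pos unfolding a2 by (simp add: power2_eq_square field_simps)
    hence "sqrt (\<beta> / a) = 4 * cosh t / (D * l)"
      using pos c by (intro real_sqrt_unique) auto
    hence xi: "\<xi> = cosh t" using \<xi>_def pos by (simp add: field_simps)
    have "a * \<beta> = (D * l * \<beta> / (4 * cosh t))\<^sup>2"
      using pos unfolding a2 by (simp add: power2_eq_square field_simps)
    hence "sqrt (a * \<beta>) = D * l * \<beta> / (4 * cosh t)"
      using pos c by (intro real_sqrt_unique) auto
    hence om: "\<omega> = D * l * \<beta> / (8 * cosh t)" using \<omega>_def by simp
    define s where "s = sqrt (\<xi>\<^sup>2 - 1)"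
    have "\<xi>\<^sup>2 - 1 = (sinh t)\<^sup>2" using xi by (simp add: cosh_square_eq)
    hence s: "s = sinh t" unfolding s_def using t_pos by (intro real_sqrt_unique) auto
    have s_pos: "s > 0" using s t_pos by simp
    have s2: "s\<^sup>2 = \<xi>\<^sup>2 - 1" using s xi by (simp add: cosh_square_eq)
    define k where "k = \<omega> * \<xi>"
    define m where "m = \<omega> * s"
    have m_pos: "m > 0" using w_pos s_pos by (simp add: m_def)
    have m2: "m\<^sup>2 = k\<^sup>2 - \<omega>\<^sup>2" unfolding m_def k_def power_mult_distrib s2 by (simp add: right_diff_distrib)
    have km: "k / m = \<xi> / s" using w_pos by (simp add: k_def m_def)
    define g where "g = (\<lambda>x. exp(-k*x) * sinh(m*x)/m)"
    define g1 where "g1 = (\<lambda>x. exp(-k*x) * (cosh(m*x) - k/m*sinh(m*x)))"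
    have uniq: "h x = g x \<and> h1 x = g1 x" if "0 \<le> x" for x
    proof (rule ode_uniq[where w = \<omega> and k = k and h = h and hd = h1 and g = g and gd = g1 and x = x])
      show "0 \<le> k" using w_pos xi_pos by (simp add: k_def)
      show "\<omega> \<noteq> 0" using w_pos by simp
      show "(h has_real_derivative h1 x) (at x)" for x by (rule d1)
      show "(h1 has_real_derivative - (\<omega>\<^sup>2 * h x) - 2 * k * h1 x) (at x)" for x
        using dh1[of x] by (simp add: k_def)
      show "(g has_real_derivative g1 x) (at x)" for x
        unfolding g_def g1_def using over_d1[OF m_pos] .
      show "(g1 has_real_derivative - (\<omega>\<^sup>2 * g x) - 2 * k * g1 x) (at x)" for x
        unfolding g_def g1_def using over_d2[OF m_pos m2] .
      show "h 0 = g 0" "h1 0 = g1 0" using init by (simp_all add: g_def g1_def)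
      show "0 \<le> x" by fact
    qed
    have mD: "m * D < t"
    proof -
      have "m * D = t * (sinh t / cosh t)"
        using s om pos c by (simp add: m_def t_def field_simps power2_eq_square)
      moreover have "sinh t / cosh t < 1" using sinh_less_cosh_real[of t] c by simp
      then have "t * (sinh t / cosh t) < t * 1" using t_pos by (intro mult_strict_left_mono)
      ultimately show ?thesis by linarith
    qed
    have pos1: "g1 x > 0 \<and> g x \<ge> 0" if x: "x \<in> {0..D}" for x
    proof -
      define y where "y = m * x"
      have y0: "0 \<le> y" using x m_pos by (simp add: y_def)
      have "y \<le> m * D" using x m_pos by (simp add: y_def)
      hence yt: "y < t" using mD by linarith
      have "sinh (t - y) > 0" using yt by simp
      hence "sinh t * cosh y - cosh t * sinh y > 0" by (simp add: sinh_diff)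
      hence "cosh y - cosh t / sinh t * sinh y > 0"
        using s_pos s by (simp add: field_simps)
      hence "cosh (m*x) - k/m * sinh (m*x) > 0" using km xi s by (simp add: y_def)
      moreover have "sinh (m*x) \<ge> 0" using y0 by (simp add: y_def)
      ultimately show ?thesis using m_pos by (simp add: g_def g1_def)
    qed
    show "\<forall>x\<in>{0..D}. h1 x > 0 \<and> h2 x < 0"
    proof
      fix x assume x: "x \<in> {0..D}"
      have "h x = g x" "h1 x = g1 x" using uniq[of x] x by auto
      with pos1[OF x] have "h1 x > 0" "h x \<ge> 0" by auto
      moreover have "\<omega> * \<xi> > 0" using w_pos xi_pos by simp
      ultimately have "\<omega>\<^sup>2 * h x \<ge> 0" "(\<omega> * \<xi>) * h1 x > 0" by simp_all
      then show "h1 x > 0 \<and> h2 x < 0" using h2eq[of x] \<open>h1 x > 0\<close> by linarith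
    qed
    have "h1 D = g1 D" using uniq[of D] pos by auto
    also have "\<dots> = exp (-(D * \<omega> * \<xi>)) * (cosh (D * \<omega> * sqrt (\<xi>\<^sup>2 - 1))
               - \<xi> / sqrt (\<xi>\<^sup>2 - 1) * sinh (D * \<omega> * sqrt (\<xi>\<^sup>2 - 1)))"
      unfolding g1_def km by (simp add: k_def m_def s_def ac_simps)
    finally show "inverse (h1 D) = exp (D * \<omega> * \<xi>) /
              (cosh (D * \<omega> * sqrt (\<xi>\<^sup>2 - 1))
               - \<xi> / sqrt (\<xi>\<^sup>2 - 1) * sinh (D * \<omega> * sqrt (\<xi>\<^sup>2 - 1)))"
      by (simp add: exp_minus divide_inverse inverse_mult_distrib mult.commute)
qed
lemma case2:
  fixes D l \<beta> a \<omega> \<xi> :: real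
    and h h1 h2 :: "real \<Rightarrow> real"
  assumes pos: "D > 0" "l > 0" "\<beta> > 0" "a > 0"
    and \<omega>_def: "\<omega> = sqrt (a * \<beta>) / 2"
    and \<xi>_def: "\<xi> = D * l / 4 * sqrt (\<beta> / a)"
    and d1: "\<And>x. (h has_real_derivative h1 x) (at x)"
    and dh1: "\<And>x. (h1 has_real_derivative (- (\<omega>\<^sup>2 * h x) - 2 * (\<omega> * \<xi>) * h1 x)) (at x)"
    and h2eq: "\<And>x. h2 x = - (\<omega>\<^sup>2 * h x) - 2 * (\<omega> * \<xi>) * h1 x"
    and init: "h 0 = 0" "h1 0 = 1"
    and w_pos: "\<omega> > 0" and xi_pos: "\<xi> > 0"
    and A: "D\<^sup>2 * l * \<beta> < 8 \<and> a = 4 / (D\<^sup>2 * \<beta>)"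
  shows "(\<forall>x\<in>{0..D}. h1 x > 0 \<and> h2 x < 0) \<and>
            inverse (h1 D) = exp (D * \<omega> * \<xi>) /
              (cos (D * \<omega> * sqrt (1 - \<xi>\<^sup>2))
               - \<xi> / sqrt (1 - \<xi>\<^sup>2) * sin (D * \<omega> * sqrt (1 - \<xi>\<^sup>2)))"
proof (intro conjI)
    have "a * \<beta> = (2 / D)\<^sup>2" using A pos by (simp add: field_simps power2_eq_square)
    hence "sqrt (a * \<beta>) = 2 / D" using pos by (intro real_sqrt_unique) auto
    hence om: "\<omega> = 1 / D" using \<omega>_def by simp
    have "\<beta> / a = (\<beta> * D / 2)\<^sup>2" using A pos by (simp add: field_simps power2_eq_square)
    hence sq: "sqrt (\<beta> / a) = \<beta> * D / 2" using pos by (intro real_sqrt_unique) auto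
    have xi: "\<xi> = D\<^sup>2 * l * \<beta> / 8" unfolding \<xi>_def sq by (simp add: power2_eq_square)
    have xi1: "\<xi> < 1" using xi A by simp
    define c where "c = sqrt (1 - \<xi>\<^sup>2)"
    have xi2: "\<xi>\<^sup>2 < 1" using xi1 xi_pos by (simp add: power_less_one_iff abs_less_iff)
    have c_pos: "c > 0" using xi2 by (simp add: c_def)
    have c2: "c\<^sup>2 = 1 - \<xi>\<^sup>2" using xi2 by (simp add: c_def)
    have "c\<^sup>2 < 1\<^sup>2" using c2 xi_pos by simp
    hence c1: "c < 1" by (rule power2_less_imp_less) simp
    define k where "k = \<omega> * \<xi>"
    define m where "m = \<omega> * c"
    have m_pos: "m > 0" using w_pos c_pos by (simp add: m_def)
    have m2: "m\<^sup>2 = \<omega>\<^sup>2 - k\<^sup>2" unfolding m_def k_def power_mult_distrib c2 by (simp add: right_diff_distrib)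
    have km: "k / m = \<xi> / c" using w_pos by (simp add: k_def m_def)
    define g where "g = (\<lambda>x. exp(-k*x) * sin(m*x)/m)"
    define g1 where "g1 = (\<lambda>x. exp(-k*x) * (cos(m*x) - k/m*sin(m*x)))"
    have uniq: "h x = g x \<and> h1 x = g1 x" if "0 \<le> x" for x
    proof (rule ode_uniq[where w = \<omega> and k = k and h = h and hd = h1 and g = g and gd = g1 and x = x])
      show "0 \<le> k" using w_pos xi_pos by (simp add: k_def)
      show "\<omega> \<noteq> 0" using w_pos by simp
      show "(h has_real_derivative h1 x) (at x)" for x by (rule d1)
      show "(h1 has_real_derivative - (\<omega>\<^sup>2 * h x) - 2 * k * h1 x) (at x)" for x
        using dh1[of x] by (simp add: k_def)
      show "(g has_real_derivative g1 x) (at x)" for x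
        unfolding g_def g1_def using under_d1[OF m_pos] .
      show "(g1 has_real_derivative - (\<omega>\<^sup>2 * g x) - 2 * k * g1 x) (at x)" for x
        unfolding g_def g1_def using under_d2[OF m_pos m2] .
      show "h 0 = g 0" "h1 0 = g1 0" using init by (simp_all add: g_def g1_def)
      show "0 \<le> x" by fact
    qed
    have mD: "m * D = c" using om pos by (simp add: m_def)
    have pos1: "g1 x > 0 \<and> g x \<ge> 0" if x: "x \<in> {0..D}" for x
    proof -
      define y where "y = m * x"
      have y0: "0 \<le> y" using x m_pos by (simp add: y_def)
      have "y \<le> m * D" using x m_pos by (simp add: y_def)
      hence yc: "y \<le> c" using mD by linarith
      have ypi: "y < pi / 2" using yc c1 pi_ge_two by linarith
      have cy: "cos y > 0" using y0 ypi by (intro cos_gt_zero_pi) auto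
      have sy: "sin y \<ge> 0" using y0 ypi by (intro sin_ge_zero) auto
      have main: "\<xi> * sin y < c * cos y"
      proof (cases "y = 0")
        case True then show ?thesis using c_pos by simp
      next
        case False
        hence "sin y < y" using y0 yc c1 by (intro sin_lt) auto
        hence "sin y < c" using yc by linarith
        hence "(sin y)\<^sup>2 < c\<^sup>2" using sy by (intro power_strict_mono) auto
        hence "(sin y)\<^sup>2 < c\<^sup>2 * ((sin y)\<^sup>2 + (cos y)\<^sup>2)" by simp
        hence i1: "(sin y)\<^sup>2 < c\<^sup>2 * (sin y)\<^sup>2 + c\<^sup>2 * (cos y)\<^sup>2" by (simp only: distrib_left)
        have e1: "(\<xi> * sin y)\<^sup>2 = (1 - c\<^sup>2) * (sin y)\<^sup>2" using c2 by (simp add: power_mult_distrib)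
        have e2: "(c * cos y)\<^sup>2 = c\<^sup>2 * (cos y)\<^sup>2" by (simp add: power_mult_distrib)
        have e3: "(1 - c\<^sup>2) * (sin y)\<^sup>2 = (sin y)\<^sup>2 - c\<^sup>2 * (sin y)\<^sup>2" by (simp add: left_diff_distrib)
        have "(\<xi> * sin y)\<^sup>2 < (c * cos y)\<^sup>2" unfolding e1 e2 e3 using i1 by linarith
        thus ?thesis by (rule power2_less_imp_less) (use cy c_pos in simp)
      qed
      hence "\<xi> * sin y / c < cos y" using c_pos by (simp add: pos_divide_less_eq mult.commute)
      hence "cos y - \<xi> / c * sin y > 0" by simp
      hence "cos (m*x) - k/m * sin (m*x) > 0" using km by (simp add: y_def)
      moreover have "sin (m*x) \<ge> 0" using sy by (simp add: y_def)
      ultimately show ?thesis using m_pos by (simp add: g_def g1_def)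
    qed
    show "\<forall>x\<in>{0..D}. h1 x > 0 \<and> h2 x < 0"
    proof
      fix x assume x: "x \<in> {0..D}"
      have "h x = g x" "h1 x = g1 x" using uniq[of x] x by auto
      with pos1[OF x] have "h1 x > 0" "h x \<ge> 0" by auto
      moreover have "\<omega> * \<xi> > 0" using w_pos xi_pos by simp
      ultimately have "\<omega>\<^sup>2 * h x \<ge> 0" "(\<omega> * \<xi>) * h1 x > 0" by simp_all
      then show "h1 x > 0 \<and> h2 x < 0" using h2eq[of x] \<open>h1 x > 0\<close> by linarith
    qed
    have "h1 D = g1 D" using uniq[of D] pos by auto
    also have "\<dots> = exp (-(D * \<omega> * \<xi>)) * (cos (D * \<omega> * sqrt (1 - \<xi>\<^sup>2))
               - \<xi> / sqrt (1 - \<xi>\<^sup>2) * sin (D * \<omega> * sqrt (1 - \<xi>\<^sup>2)))"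
      unfolding g1_def km by (simp add: k_def m_def c_def ac_simps)
    finally show "inverse (h1 D) = exp (D * \<omega> * \<xi>) /
              (cos (D * \<omega> * sqrt (1 - \<xi>\<^sup>2))
               - \<xi> / sqrt (1 - \<xi>\<^sup>2) * sin (D * \<omega> * sqrt (1 - \<xi>\<^sup>2)))"
      by (simp add: exp_minus divide_inverse inverse_mult_distrib mult.commute)
qed

theorem lemma13:
  fixes D l \<beta> a \<omega> \<xi> :: real
    and h h1 h2 :: "real \<Rightarrow> real"
  assumes pos: "D > 0" "l > 0" "\<beta> > 0" "a > 0"
    and \<omega>_def: "\<omega> = sqrt (a * \<beta>) / 2"
    and \<xi>_def: "\<xi> = D * l / 4 * sqrt (\<beta> / a)"
    and d1: "\<And>x. (h has_real_derivative h1 x) (at x)"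
    and d2: "\<And>x. (h1 has_real_derivative h2 x) (at x)"
    and ode: "\<And>x. \<omega>\<^sup>2 * h x + 2 * \<xi> * \<omega> * h1 x + h2 x = 0"
    and init: "h 0 = 0" "h1 0 = 1"
  shows "(a = D\<^sup>2 * l\<^sup>2 * \<beta> / 16 * (1 - (tanh (D\<^sup>2 * l * \<beta> / 8))\<^sup>2) \<longrightarrow>
            (\<forall>x\<in>{0..D}. h1 x > 0 \<and> h2 x < 0) \<and>
            inverse (h1 D) = exp (D * \<omega> * \<xi>) /
              (cosh (D * \<omega> * sqrt (\<xi>\<^sup>2 - 1))
               - \<xi> / sqrt (\<xi>\<^sup>2 - 1) * sinh (D * \<omega> * sqrt (\<xi>\<^sup>2 - 1))))
       \<and> (D\<^sup>2 * l * \<beta> < 8 \<and> a = 4 / (D\<^sup>2 * \<beta>) \<longrightarrow>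
            (\<forall>x\<in>{0..D}. h1 x > 0 \<and> h2 x < 0) \<and>
            inverse (h1 D) = exp (D * \<omega> * \<xi>) /
              (cos (D * \<omega> * sqrt (1 - \<xi>\<^sup>2))
               - \<xi> / sqrt (1 - \<xi>\<^sup>2) * sin (D * \<omega> * sqrt (1 - \<xi>\<^sup>2))))"
proof -
  have w_pos: "\<omega> > 0" unfolding \<omega>_def using pos by simp
  have xi_pos: "\<xi> > 0" unfolding \<xi>_def using pos by simp
  have h2eq: "h2 x = - (\<omega>\<^sup>2 * h x) - 2 * (\<omega> * \<xi>) * h1 x" for x
  proof -
    have "2 * (\<omega> * \<xi>) * h1 x = 2 * \<xi> * \<omega> * h1 x" by simp
    then show ?thesis using ode[of x] by linarith
  qed
  have dh1: "(h1 has_real_derivative (- (\<omega>\<^sup>2 * h x) - 2 * (\<omega> * \<xi>) * h1 x)) (at x)" for x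
    using d2[of x] h2eq[of x] by simp
  show ?thesis
  proof (rule conjI; rule impI)
    assume A: "a = D\<^sup>2 * l\<^sup>2 * \<beta> / 16 * (1 - (tanh (D\<^sup>2 * l * \<beta> / 8))\<^sup>2)"
    show "(\<forall>x\<in>{0..D}. h1 x > 0 \<and> h2 x < 0) \<and>
            inverse (h1 D) = exp (D * \<omega> * \<xi>) /
              (cosh (D * \<omega> * sqrt (\<xi>\<^sup>2 - 1))
               - \<xi> / sqrt (\<xi>\<^sup>2 - 1) * sinh (D * \<omega> * sqrt (\<xi>\<^sup>2 - 1)))"
      by (rule case1[OF pos \<omega>_def \<xi>_def d1 dh1 h2eq init w_pos xi_pos A])
  next
    assume A: "D\<^sup>2 * l * \<beta> < 8 \<and> a = 4 / (D\<^sup>2 * \<beta>)"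
    show "(\<forall>x\<in>{0..D}. h1 x > 0 \<and> h2 x < 0) \<and>
            inverse (h1 D) = exp (D * \<omega> * \<xi>) /
              (cos (D * \<omega> * sqrt (1 - \<xi>\<^sup>2))
               - \<xi> / sqrt (1 - \<xi>\<^sup>2) * sin (D * \<omega> * sqrt (1 - \<xi>\<^sup>2)))"
      by (rule case2[OF pos \<omega>_def \<xi>_def d1 dh1 h2eq init w_pos xi_pos A])
  qed
qed

end
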